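(* Let $G$ be a topological group and $\rho:G\to U(N)$ a continuous unitary representation. For $V\in PU(N)$ commuting with $\rho(g)$ for all $g$, choose a lift $\tilde V\in U(N)$; then $\rho(g)^\dagger\tilde V\rho(g)=\chi[V](g)\tilde V$ defines a one-dimensional representation $\chi[V]:G\to U(1)$ independent of the lift. The path components of the space of $\rho$-symmetric projective unitaries in $PU(N)$ are in bijection with the values of $\chi[V]$ attained, each attained value having finite order; every element of finite order in $X_G=\mathrm{Hom}(G,U(1))$ (the torsion subgroup $X_G^T$) is attained for a suitable representation $\rho$ (namely $\rho=\bigoplus_{p=0}^{n-1}\chi^p$ if $\chi$ has order $n$). Moreover $\chi[V]$ is stable under $V\mapsto V\otimes\mathbb{1}$ and satisfies $\chi[V\otimes Q]=\chi[V]\chi[Q]$.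
   Context: $X_G$ is the group of continuous homomorphisms $G\to U(1)$ with pointwise multiplication; $X_G^T$ its subgroup of elements of finite order. A projective unitary is $\rho$-symmetric if it commutes with $\rho(g)$ in $PU(N)$ for all $g\in G$. *)

theory Defs
  imports "HOL-Analysis.Analysis" "HOL-Algebra.Group"
begin

definition topological_group :: "('g, 'x) monoid_scheme \<Rightarrow> 'g topology \<Rightarrow> bool" where
  "topological_group G T \<longleftrightarrow> group G \<and> topspace T = carrier G \<and>
     continuous_map (prod_topology T T) T (\<lambda>(x, y). x \<otimes>\<^bsub>G\<^esub> y) \<and>
     continuous_map T T (\<lambda>x. inv\<^bsub>G\<^esub> x)"

definition character :: "('g, 'x) monoid_scheme \<Rightarrow> 'g topology \<Rightarrow> ('g \<Rightarrow> complex) \<Rightarrow> bool" where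
  "character G T \<psi> \<longleftrightarrow> continuous_map T euclidean \<psi> \<and>
     (\<forall>g\<in>carrier G. cmod (\<psi> g) = 1) \<and>
     (\<forall>g\<in>carrier G. \<forall>h\<in>carrier G. \<psi> (g \<otimes>\<^bsub>G\<^esub> h) = \<psi> g * \<psi> h)"

definition finite_order_char :: "('g, 'x) monoid_scheme \<Rightarrow> ('g \<Rightarrow> complex) \<Rightarrow> bool" where
  "finite_order_char G \<psi> \<longleftrightarrow> (\<exists>n::nat. n > 0 \<and> (\<forall>g\<in>carrier G. \<psi> g ^ n = 1))"

definition char_order :: "('g, 'x) monoid_scheme \<Rightarrow> ('g \<Rightarrow> complex) \<Rightarrow> nat" where
  "char_order G \<psi> = (LEAST n::nat. n > 0 \<and> (\<forall>g\<in>carrier G. \<psi> g ^ n = 1))"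

definition adjoint_mat :: "complex^'n^'n \<Rightarrow> complex^'n^'n" where
  "adjoint_mat A = (\<chi> i j. cnj (A $ j $ i))"

definition scal_mat :: "complex \<Rightarrow> complex^'n^'n \<Rightarrow> complex^'n^'n" where
  "scal_mat c A = (\<chi> i j. c * A $ i $ j)"

definition unitary_set :: "(complex^'n^'n) set" where
  "unitary_set = {U. adjoint_mat U ** U = mat 1 \<and> U ** adjoint_mat U = mat 1}"

definition U_top :: "(complex^'n^'n) topology" where
  "U_top = subtopology euclidean unitary_set"

text \<open>The class of U in PU(N) = U(N)/U(1).\<close>
definition pclass :: "complex^'n^'n \<Rightarrow> (complex^'n^'n) set" where
  "pclass U = {scal_mat c U | c. cmod c = 1}"

definition PU_set :: "(complex^'n^'n) set set" where
  "PU_set = pclass ` unitary_set"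

definition PU_top :: "(complex^'n^'n) set topology" where
  "PU_top = topology (\<lambda>S. S \<subseteq> PU_set \<and> openin U_top {U \<in> unitary_set. pclass U \<in> S})"

definition unitary_rep :: "('g, 'x) monoid_scheme \<Rightarrow> 'g topology \<Rightarrow> ('g \<Rightarrow> complex^'n^'n) \<Rightarrow> bool" where
  "unitary_rep G T \<rho> \<longleftrightarrow> continuous_map T euclidean \<rho> \<and>
     (\<forall>g\<in>carrier G. \<rho> g \<in> unitary_set) \<and>
     (\<forall>g\<in>carrier G. \<forall>h\<in>carrier G. \<rho> (g \<otimes>\<^bsub>G\<^esub> h) = \<rho> g ** \<rho> h)"

definition sym_PU :: "('g, 'x) monoid_scheme \<Rightarrow> ('g \<Rightarrow> complex^'n^'n) \<Rightarrow> (complex^'n^'n) set set" where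
  "sym_PU G \<rho> = {V \<in> PU_set. \<forall>g\<in>carrier G. \<forall>U\<in>V. pclass (U ** \<rho> g) = pclass (\<rho> g ** U)}"

definition chiV :: "('g, 'x) monoid_scheme \<Rightarrow> ('g \<Rightarrow> complex^'n^'n) \<Rightarrow> (complex^'n^'n) set \<Rightarrow> 'g \<Rightarrow> complex" where
  "chiV G \<rho> V = (\<lambda>g\<in>carrier G. THE c. adjoint_mat (\<rho> g) ** (SOME U. U \<in> V) ** \<rho> g
                                        = scal_mat c (SOME U. U \<in> V))"

definition kron :: "complex^'n^'n \<Rightarrow> complex^'m^'m \<Rightarrow> complex^('n \<times> 'm)^('n \<times> 'm)" where
  "kron A B = (\<chi> p q. A $ fst p $ fst q * B $ snd p $ snd q)"

definition tensor_rep :: "('g \<Rightarrow> complex^'n^'n) \<Rightarrow> ('g \<Rightarrow> complex^'m^'m) \<Rightarrow> 'g \<Rightarrow> complex^('n \<times> 'm)^('n \<times> 'm)" where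
  "tensor_rep \<rho> \<sigma> = (\<lambda>g. kron (\<rho> g) (\<sigma> g))"

definition ptensor :: "(complex^'n^'n) set \<Rightarrow> (complex^'m^'m) set \<Rightarrow> (complex^('n \<times> 'm)^('n \<times> 'm)) set" where
  "ptensor V Q = {kron U W | U W. U \<in> V \<and> W \<in> Q}"

text \<open>The representation \<oplus>_{p<n} \<psi>^p, with the diagonal indexed via a bijection e : 'k \<rightarrow> {..<n}.\<close>
definition diag_powers_rep :: "('k \<Rightarrow> nat) \<Rightarrow> ('g \<Rightarrow> complex) \<Rightarrow> 'g \<Rightarrow> complex^'k^'k" where
  "diag_powers_rep e \<psi> = (\<lambda>g. \<chi> i j. if i = j then \<psi> g ^ e i else 0)"

end

theory Submission
  imports Defs
begin

lemma scal_mat_nth[simp]: "scal_mat c A $ i $ j = c * A $ i $ j"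
  by (simp add: scal_mat_def)
lemma adjoint_nth[simp]: "adjoint_mat A $ i $ j = cnj (A $ j $ i)"
  by (simp add: adjoint_mat_def)
lemma mmult_nth: "(A ** B) $ i $ j = (\<Sum>k\<in>UNIV. A $ i $ k * B $ k $ j)"
  by (simp add: matrix_matrix_mult_def)

lemma adj_adj[simp]: "adjoint_mat (adjoint_mat A) = A"
  by (simp add: vec_eq_iff)
lemma adj_mul: "adjoint_mat (A ** B) = adjoint_mat B ** adjoint_mat A"
  by (simp add: vec_eq_iff mmult_nth mult.commute)
lemma adj_scal: "adjoint_mat (scal_mat c A) = scal_mat (cnj c) (adjoint_mat A)"
  by (simp add: vec_eq_iff)
lemma adj_one[simp]: "adjoint_mat (mat 1) = (mat 1 :: complex^'n^'n)"
  by (simp add: vec_eq_iff mat_def)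
lemma scal_mul_left: "scal_mat c A ** B = scal_mat c (A ** B)"
  by (simp add: vec_eq_iff mmult_nth sum_distrib_left mult.assoc)
lemma scal_mul_right: "A ** scal_mat c B = scal_mat c (A ** B)"
  by (simp add: vec_eq_iff mmult_nth sum_distrib_left mult.left_commute)
lemma scal_scal: "scal_mat c (scal_mat d A) = scal_mat (c * d) A"
  by (simp add: vec_eq_iff mult.assoc)
lemma scal_one[simp]: "scal_mat 1 A = A"
  by (simp add: vec_eq_iff)
lemma mat1_ne0: "(mat 1 :: complex^'n^'n) \<noteq> 0"
proof
  assume "(mat 1 :: complex^'n^'n) = 0"
  then have "(mat 1 :: complex^'n^'n) $ undefined $ undefined = 0" by simp
  then show False by (simp add: mat_def)
qed

lemma unitary_ne0: "U \<in> unitary_set \<Longrightarrow> U \<noteq> 0"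
  using mat1_ne0 by (auto simp: unitary_set_def)

lemma ne0_entry: "(U::complex^'n^'n) \<noteq> 0 \<Longrightarrow> \<exists>i j. U $ i $ j \<noteq> 0"
  by (simp add: vec_eq_iff) 

lemma scal_cancel: "scal_mat c U = scal_mat d U \<Longrightarrow> U \<noteq> 0 \<Longrightarrow> c = d"
proof -
  assume h: "scal_mat c U = scal_mat d U" "U \<noteq> 0"
  then obtain i j where "U $ i $ j \<noteq> 0" using ne0_entry by blast
  moreover have "c * U $ i $ j = d * U $ i $ j" using h(1) by (metis scal_mat_nth)
  ultimately show ?thesis by simp
qed

lemma unitary_mul: "U \<in> unitary_set \<Longrightarrow> W \<in> unitary_set \<Longrightarrow> U ** W \<in> unitary_set"
  unfolding unitary_set_def
  by (simp add: adj_mul matrix_mul_assoc) (metis matrix_mul_assoc matrix_mul_lid)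

lemma unitary_adj: "U \<in> unitary_set \<Longrightarrow> adjoint_mat U \<in> unitary_set"
  unfolding unitary_set_def by simp

lemma unitary_scal: "U \<in> unitary_set \<Longrightarrow> cmod c = 1 \<Longrightarrow> scal_mat c U \<in> unitary_set"
proof -
  assume "U \<in> unitary_set" "cmod c = 1"
  moreover have "cnj c * c = 1" using \<open>cmod c = 1\<close>
    by (metis complex_norm_square mult.commute of_real_1 power_one)
  ultimately show ?thesis
    unfolding unitary_set_def by (simp add: adj_scal scal_mul_left scal_mul_right scal_scal mult.commute)
qed

lemma unitary_one: "mat 1 \<in> unitary_set"
  by (simp add: unitary_set_def)

lemma cnj_mult_unit: "cmod c = 1 \<Longrightarrow> cnj c * c = 1"
  by (metis complex_norm_square mult.commute of_real_1 power_one)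


lemma pclass_self: "U \<in> pclass U"
  unfolding pclass_def by (rule CollectI, rule exI[of _ 1]) simp

lemma pclass_mem: "W \<in> pclass U \<Longrightarrow> \<exists>c. cmod c = 1 \<and> W = scal_mat c U"
  unfolding pclass_def by blast

lemma pclass_eqD: "pclass A = pclass B \<Longrightarrow> \<exists>c. cmod c = 1 \<and> A = scal_mat c B"
  using pclass_self pclass_mem by metis

lemma PU_mem_unitary: "V \<in> PU_set \<Longrightarrow> U \<in> V \<Longrightarrow> U \<in> unitary_set"
  unfolding PU_set_def using pclass_mem unitary_scal by blast

lemma PU_two_lifts: "V \<in> PU_set \<Longrightarrow> U1 \<in> V \<Longrightarrow> U2 \<in> V \<Longrightarrow> \<exists>d. cmod d = 1 \<and> U2 = scal_mat d U1"
proof -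
  assume "V \<in> PU_set" "U1 \<in> V" "U2 \<in> V"
  then obtain U0 where V: "V = pclass U0" unfolding PU_set_def by blast
  obtain a where a: "cmod a = 1" "U1 = scal_mat a U0" using \<open>U1 \<in> V\<close> V pclass_mem by blast
  obtain b where b: "cmod b = 1" "U2 = scal_mat b U0" using \<open>U2 \<in> V\<close> V pclass_mem by blast
  have "U2 = scal_mat (b * cnj a) U1"
    using a b cnj_mult_unit[of a] by (simp add: scal_scal mult.assoc)
  moreover have "cmod (b * cnj a) = 1" using a b by (simp add: norm_mult)
  ultimately show ?thesis by blast
qed

lemma PU_some: "V \<in> PU_set \<Longrightarrow> (SOME U. U \<in> V) \<in> V"
  unfolding PU_set_def using pclass_self by (metis imageE someI)

lemma pclass_in_PU: "U \<in> unitary_set \<Longrightarrow> pclass U \<in> PU_set"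
  unfolding PU_set_def by blast

lemma conj_scal: "adjoint_mat R ** scal_mat d U ** R = scal_mat d (adjoint_mat R ** U ** R)"
  by (simp add: scal_mul_left scal_mul_right)

lemma sym_c:
  assumes "V \<in> sym_PU G \<rho>" "U \<in> V" "g \<in> carrier G" "\<rho> g \<in> unitary_set"
  shows "\<exists>c. cmod c = 1 \<and> adjoint_mat (\<rho> g) ** U ** \<rho> g = scal_mat c U"
proof -
  have "pclass (U ** \<rho> g) = pclass (\<rho> g ** U)" using assms unfolding sym_PU_def by blast
  then obtain d where d: "cmod d = 1" "U ** \<rho> g = scal_mat d (\<rho> g ** U)" using pclass_eqD by blast
  have "adjoint_mat (\<rho> g) ** U ** \<rho> g = adjoint_mat (\<rho> g) ** (U ** \<rho> g)"
    by (simp add: matrix_mul_assoc)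
  also have "\<dots> = scal_mat d U"
  proof -
    have "adjoint_mat (\<rho> g) ** (\<rho> g ** U) = U"
      using assms(4) by (simp add: unitary_set_def matrix_mul_assoc)
    then show ?thesis using d by (simp add: scal_mul_right)
  qed
  finally show ?thesis using d by blast
qed

lemma chi_char:
  assumes "V \<in> sym_PU G \<rho>" "U \<in> V" "g \<in> carrier G" "\<rho> g \<in> unitary_set"
  shows "adjoint_mat (\<rho> g) ** U ** \<rho> g = scal_mat (chiV G \<rho> V g) U \<and> cmod (chiV G \<rho> V g) = 1"
proof -
  have VPU: "V \<in> PU_set" using assms unfolding sym_PU_def by blast
  define U' where "U' = (SOME U. U \<in> V)"
  have U': "U' \<in> V" using PU_some[OF VPU] U'_def by simp
  have U'ne: "U' \<noteq> 0" using PU_mem_unitary[OF VPU U'] unitary_ne0 by blast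
  obtain c where c: "cmod c = 1" "adjoint_mat (\<rho> g) ** U' ** \<rho> g = scal_mat c U'"
    using sym_c[OF assms(1) U' assms(3,4)] by blast
  have "chiV G \<rho> V g = (THE c. adjoint_mat (\<rho> g) ** U' ** \<rho> g = scal_mat c U')"
    unfolding chiV_def U'_def using assms(3) by simp
  also have "\<dots> = c"
    using c(2) scal_cancel[OF _ U'ne] by (intro the_equality) auto
  finally have chi: "chiV G \<rho> V g = c" .
  obtain d where d: "cmod d = 1" "U = scal_mat d U'" using PU_two_lifts[OF VPU U' assms(2)] by blast
  have "adjoint_mat (\<rho> g) ** U ** \<rho> g = scal_mat c U"
    using c d by (simp add: conj_scal scal_scal mult.commute)
  then show ?thesis using chi c by simp
qed


lemma cont_mmult[continuous_intros]:
  fixes f g :: "'a::topological_space \<Rightarrow> complex^'n^'n"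
  shows "continuous_on S f \<Longrightarrow> continuous_on S g \<Longrightarrow> continuous_on S (\<lambda>x. f x ** g x)"
  unfolding matrix_matrix_mult_def by (intro continuous_intros)

lemma cont_adj[continuous_intros]:
  fixes f :: "'a::topological_space \<Rightarrow> complex^'n^'n"
  shows "continuous_on S f \<Longrightarrow> continuous_on S (\<lambda>x. adjoint_mat (f x))"
  unfolding adjoint_mat_def by (intro continuous_intros)

lemma cont_scal[continuous_intros]:
  fixes f :: "'a::topological_space \<Rightarrow> complex^'n^'n"
  shows "continuous_on S f \<Longrightarrow> continuous_on S c \<Longrightarrow> continuous_on S (\<lambda>x. scal_mat (c x) (f x))"
  unfolding scal_mat_def by (intro continuous_intros)

lemma rep_unitary: "unitary_rep G T \<rho> \<Longrightarrow> g \<in> carrier G \<Longrightarrow> \<rho> g \<in> unitary_set"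
  unfolding unitary_rep_def by blast

lemma tg_group: "topological_group G T \<Longrightarrow> group G"
  unfolding topological_group_def by blast
lemma tg_top: "topological_group G T \<Longrightarrow> topspace T = carrier G"
  unfolding topological_group_def by blast
lemma rep_mult: "unitary_rep G T \<rho> \<Longrightarrow> g \<in> carrier G \<Longrightarrow> h \<in> carrier G \<Longrightarrow> \<rho> (g \<otimes>\<^bsub>G\<^esub> h) = \<rho> g ** \<rho> h"
  unfolding unitary_rep_def by blast
lemma rep_cont: "unitary_rep G T \<rho> \<Longrightarrow> continuous_map T euclidean \<rho>"
  unfolding unitary_rep_def by blast

lemma chi_character:
  assumes rep: "unitary_rep G T \<rho>" and tg: "topological_group G T" and V: "V \<in> sym_PU G \<rho>"
  shows "character G T (chiV G \<rho> V)"
proof -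
  have VPU: "V \<in> PU_set" using V unfolding sym_PU_def by blast
  define U where "U = (SOME U. U \<in> V)"
  have U: "U \<in> V" using PU_some[OF VPU] U_def by simp
  have Une: "U \<noteq> 0" using PU_mem_unitary[OF VPU U] unitary_ne0 by blast
  obtain i j where ij: "U $ i $ j \<noteq> 0" using ne0_entry[OF Une] by blast
  have rel: "\<And>g. g \<in> carrier G \<Longrightarrow> adjoint_mat (\<rho> g) ** U ** \<rho> g = scal_mat (chiV G \<rho> V g) U \<and> cmod (chiV G \<rho> V g) = 1"
    using chi_char[OF V U] rep_unitary[OF rep] by blast
  define F where "F = (\<lambda>A. (adjoint_mat A ** U ** A) $ i $ j / U $ i $ j)"
  have cF: "continuous_on UNIV F" unfolding F_def
    by (rule continuous_on_divide[OF continuous_on_component[OF continuous_on_component[OF cont_mmult[OF cont_mmult[OF cont_adj[OF continuous_on_id] continuous_on_const] continuous_on_id]]] continuous_on_const]) (use ij in auto)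
  have "continuous_map T euclidean (F \<circ> \<rho>)"
    using rep_cont[OF rep] cF by (intro continuous_map_compose) auto
  moreover have "\<And>g. g \<in> topspace T \<Longrightarrow> (F \<circ> \<rho>) g = chiV G \<rho> V g"
  proof -
    fix g assume "g \<in> topspace T"
    then have g: "g \<in> carrier G" using tg_top[OF tg] by simp
    show "(F \<circ> \<rho>) g = chiV G \<rho> V g" using rel[OF g] ij unfolding F_def by simp
  qed
  ultimately have cont: "continuous_map T euclidean (chiV G \<rho> V)"
    by (rule continuous_map_eq)
  have mult: "chiV G \<rho> V (g \<otimes>\<^bsub>G\<^esub> h) = chiV G \<rho> V g * chiV G \<rho> V h"
    if g: "g \<in> carrier G" and h: "h \<in> carrier G" for g h
  proof -
    have gh: "g \<otimes>\<^bsub>G\<^esub> h \<in> carrier G" using tg_group[OF tg] g h by (simp add: group.is_monoid monoid.m_closed)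
    have rgh: "\<rho> (g \<otimes>\<^bsub>G\<^esub> h) = \<rho> g ** \<rho> h" using rep_mult[OF rep g h] .
    have "scal_mat (chiV G \<rho> V (g \<otimes>\<^bsub>G\<^esub> h)) U = adjoint_mat (\<rho> h) ** (adjoint_mat (\<rho> g) ** U ** \<rho> g) ** \<rho> h"
      using rel[OF gh] rgh by (simp add: adj_mul matrix_mul_assoc)
    also have "\<dots> = scal_mat (chiV G \<rho> V g * chiV G \<rho> V h) U"
      using rel[OF g] rel[OF h] by (simp add: conj_scal scal_scal)
    finally show ?thesis by (rule scal_cancel[OF _ Une])
  qed
  show ?thesis unfolding character_def
    apply (intro conjI ballI)
      apply (rule cont)
     apply (erule conjunct2[OF rel])
    apply (erule (1) mult)
    done
qed

lemma scal_eq_mat: "scal_mat c U = mat c ** (U::complex^'n^'n)"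
proof -
  have "\<And>i j. (\<Sum>k\<in>UNIV. (if i = k then c else 0) * U $ k $ j) = c * U $ i $ j"
    by (simp add: if_distrib[of "\<lambda>x. x * _"] sum.delta cong: if_cong)
  then show ?thesis by (simp add: vec_eq_iff mmult_nth mat_def)
qed

lemma det_mat_c: "det (mat c :: complex^'n^'n) = c ^ CARD('n)"
proof -
  have "det (mat c :: complex^'n^'n) = prod (\<lambda>i. (mat c :: complex^'n^'n) $ i $ i) UNIV"
    by (rule det_diagonal) (simp add: mat_def)
  then show ?thesis by (simp add: mat_def)
qed

lemma det_scal: "det (scal_mat c (U::complex^'n^'n)) = c ^ CARD('n) * det U"
  by (simp only: scal_eq_mat det_mul det_mat_c)

lemma unitary_det: "(U::complex^'n^'n) \<in> unitary_set \<Longrightarrow> det (adjoint_mat U) * det U = 1"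
proof -
  assume "U \<in> unitary_set"
  then have "det (adjoint_mat U ** U) = 1" by (simp add: unitary_set_def)
  then show ?thesis by (simp only: det_mul)
qed

lemma chi_finite_order:
  fixes \<rho> :: "'g \<Rightarrow> complex^'n^'n"
  assumes rep: "unitary_rep G T \<rho>" and V: "V \<in> sym_PU G \<rho>"
  shows "\<forall>g\<in>carrier G. chiV G \<rho> V g ^ CARD('n) = 1"
proof
  fix g assume g: "g \<in> carrier G"
  have VPU: "V \<in> PU_set" using V unfolding sym_PU_def by blast
  define U where "U = (SOME U. U \<in> V)"
  have U: "U \<in> V" using PU_some[OF VPU] U_def by simp
  have Uu: "(U :: complex^'n^'n) \<in> unitary_set" using PU_mem_unitary[OF VPU U] .
  have "det U \<noteq> 0" using unitary_det[OF unitary_adj[OF Uu]] by auto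
  have "det (adjoint_mat (\<rho> g) ** U ** \<rho> g) = (det (adjoint_mat (\<rho> g)) * det (\<rho> g)) * det U"
    by (simp only: det_mul mult_ac)
  also have "\<dots> = det U" using unitary_det[OF rep_unitary[OF rep g]] by simp
  finally have "det (adjoint_mat (\<rho> g) ** U ** \<rho> g) = det U" .
  moreover have "det (adjoint_mat (\<rho> g) ** U ** \<rho> g) = chiV G \<rho> V g ^ CARD('n) * det U"
    using chi_char[OF V U g rep_unitary[OF rep g]] det_scal by metis
  ultimately show "chiV G \<rho> V g ^ CARD('n) = 1" using \<open>det U \<noteq> 0\<close> by simp
qed


lemma pclass_scal: "cmod c = 1 \<Longrightarrow> pclass (scal_mat c Y) = pclass Y"
proof -
  assume c: "cmod c = 1"
  show ?thesis
  proof
    show "pclass (scal_mat c Y) \<subseteq> pclass Y"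
      unfolding pclass_def using c by (auto simp: scal_scal norm_mult)
    show "pclass Y \<subseteq> pclass (scal_mat c Y)"
    proof
      fix X assume "X \<in> pclass Y"
      then obtain a where a: "cmod a = 1" "X = scal_mat a Y" using pclass_mem by blast
      have "X = scal_mat (a * cnj c) (scal_mat c Y)"
        using a cnj_mult_unit[OF c] by (simp add: scal_scal mult.assoc)
      moreover have "cmod (a * cnj c) = 1" using a c by (simp add: norm_mult)
      ultimately show "X \<in> pclass (scal_mat c Y)" unfolding pclass_def by blast
    qed
  qed
qed

lemma sym_from_rel:
  assumes U0: "U0 \<in> unitary_set" and R: "R \<in> unitary_set" and c: "cmod c = 1"
    and rel: "adjoint_mat R ** U0 ** R = scal_mat c U0" and X: "X \<in> pclass U0"
  shows "pclass (X ** R) = pclass (R ** X)"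
proof -
  obtain a where a: "cmod a = 1" "X = scal_mat a U0" using pclass_mem[OF X] by blast
  have relX: "adjoint_mat R ** X ** R = scal_mat c X"
    using rel a by (simp add: conj_scal scal_scal mult.commute)
  have "X ** R = R ** (adjoint_mat R ** X ** R)"
    using R by (simp add: unitary_set_def matrix_mul_assoc)
  also have "\<dots> = scal_mat c (R ** X)" using relX by (simp add: scal_mul_right)
  finally show ?thesis using pclass_scal[OF c] by simp
qed

lemma kron_nth: "kron A B $ p $ q = A $ fst p $ fst q * B $ snd p $ snd q"
  by (simp add: kron_def)

lemma kron_mul: "kron A B ** kron C D = kron (A ** C) (B ** D)"
proof -
  have "\<And>p q. (\<Sum>k\<in>UNIV. A $ fst p $ fst k * B $ snd p $ snd k * (C $ fst k $ fst q * D $ snd k $ snd q))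
     = (\<Sum>k1\<in>UNIV. A $ fst p $ k1 * C $ k1 $ fst q) * (\<Sum>k2\<in>UNIV. B $ snd p $ k2 * D $ k2 $ snd q)"
  proof -
    fix p q
    have "(\<Sum>k1\<in>UNIV. A $ fst p $ k1 * C $ k1 $ fst q) * (\<Sum>k2\<in>UNIV. B $ snd p $ k2 * D $ k2 $ snd q)
      = (\<Sum>k\<in>UNIV \<times> UNIV. (A $ fst p $ fst k * C $ fst k $ fst q) * (B $ snd p $ snd k * D $ snd k $ snd q))"
      by (simp add: sum_product sum.cartesian_product split_beta)
    also have "\<dots> = (\<Sum>k\<in>UNIV. A $ fst p $ fst k * B $ snd p $ snd k * (C $ fst k $ fst q * D $ snd k $ snd q))"
      by (simp add: UNIV_Times_UNIV[symmetric] mult_ac del: UNIV_Times_UNIV)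
    finally show "?thesis p q" by simp
  qed
  then show ?thesis by (simp add: vec_eq_iff mmult_nth kron_nth)
qed

lemma kron_adj: "adjoint_mat (kron A B) = kron (adjoint_mat A) (adjoint_mat B)"
  by (simp add: vec_eq_iff kron_nth)

lemma kron_scal: "kron (scal_mat c A) (scal_mat d B) = scal_mat (c * d) (kron A B)"
  by (simp add: vec_eq_iff kron_nth mult_ac)

lemma kron_scal1: "kron (scal_mat c A) B = scal_mat c (kron A B)"
  by (simp add: vec_eq_iff kron_nth mult_ac)

lemma kron_one: "kron (mat 1 :: complex^'n^'n) (mat 1 :: complex^'m^'m) = mat 1"
  by (auto simp: vec_eq_iff kron_nth mat_def prod_eq_iff)

lemma kron_unitary: "U \<in> unitary_set \<Longrightarrow> W \<in> unitary_set \<Longrightarrow> kron U W \<in> unitary_set"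
  unfolding unitary_set_def by (simp add: kron_adj kron_mul kron_one)

lemma ptensor_pclass: "ptensor (pclass U) (pclass W) = pclass (kron U W)"
proof
  show "ptensor (pclass U) (pclass W) \<subseteq> pclass (kron U W)"
  proof
    fix X assume "X \<in> ptensor (pclass U) (pclass W)"
    then obtain U' W' where X: "X = kron U' W'" "U' \<in> pclass U" "W' \<in> pclass W" unfolding ptensor_def by blast
    obtain a where a: "cmod a = 1" "U' = scal_mat a U" using pclass_mem[OF X(2)] by blast
    obtain b where b: "cmod b = 1" "W' = scal_mat b W" using pclass_mem[OF X(3)] by blast
    have "X = scal_mat (a * b) (kron U W)" using X a b by (simp add: kron_scal)
    moreover have "cmod (a * b) = 1" using a b by (simp add: norm_mult)
    ultimately show "X \<in> pclass (kron U W)" unfolding pclass_def by blast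
  qed
  show "pclass (kron U W) \<subseteq> ptensor (pclass U) (pclass W)"
  proof
    fix X assume "X \<in> pclass (kron U W)"
    then obtain a where a: "cmod a = 1" "X = scal_mat a (kron U W)" using pclass_mem by blast
    have "X = kron (scal_mat a U) W" using a by (simp add: kron_scal1)
    moreover have "scal_mat a U \<in> pclass U" using a unfolding pclass_def by blast
    moreover have "W \<in> pclass W" by (rule pclass_self)
    ultimately show "X \<in> ptensor (pclass U) (pclass W)" unfolding ptensor_def by blast
  qed
qed

lemma sym_PU_mem:
  fixes \<rho> :: "'g \<Rightarrow> complex^'n^'n"
  assumes U0: "U0 \<in> unitary_set"
    and R: "\<And>g. g \<in> carrier G \<Longrightarrow> \<rho> g \<in> unitary_set"
    and rel: "\<And>g. g \<in> carrier G \<Longrightarrow> \<exists>c. cmod c = 1 \<and> adjoint_mat (\<rho> g) ** U0 ** \<rho> g = scal_mat c U0"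
  shows "pclass U0 \<in> sym_PU G \<rho>"
  unfolding sym_PU_def
proof (intro CollectI conjI ballI)
  show "pclass U0 \<in> PU_set" using U0 by (rule pclass_in_PU)
  fix g X assume g: "g \<in> carrier G" and X: "X \<in> pclass U0"
  obtain c where "cmod c = 1" "adjoint_mat (\<rho> g) ** U0 ** \<rho> g = scal_mat c U0" using rel[OF g] by blast
  then show "pclass (X ** \<rho> g) = pclass (\<rho> g ** X)"
    using sym_from_rel[OF U0 R[OF g] _ _ X] by blast
qed

lemma sym_PU_rep:
  assumes "V \<in> sym_PU G \<rho>" shows "\<exists>U. U \<in> unitary_set \<and> V = pclass U \<and> U \<in> V"
  using assms pclass_self unfolding sym_PU_def PU_set_def by blast


lemma tensor_part:
  fixes \<rho> :: "'g \<Rightarrow> complex^'n^'n" and \<sigma> :: "'g \<Rightarrow> complex^'m^'m"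
  assumes rep: "unitary_rep G T \<rho>" and rs: "unitary_rep G T \<sigma>"
    and V: "V \<in> sym_PU G \<rho>" and Q: "Q \<in> sym_PU G \<sigma>"
  shows "ptensor V Q \<in> sym_PU G (tensor_rep \<rho> \<sigma>) \<and>
           (\<forall>g\<in>carrier G. chiV G (tensor_rep \<rho> \<sigma>) (ptensor V Q) g
                           = chiV G \<rho> V g * chiV G \<sigma> Q g)"
proof -
  obtain U where U: "U \<in> unitary_set" "V = pclass U" "U \<in> V" using sym_PU_rep[OF V] by blast
  obtain W where W: "W \<in> unitary_set" "Q = pclass W" "W \<in> Q" using sym_PU_rep[OF Q] by blast
  have eq: "ptensor V Q = pclass (kron U W)" using U W ptensor_pclass by simp
  have KU: "kron U W \<in> unitary_set" using U W kron_unitary by blast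
  have Ru: "\<And>g. g \<in> carrier G \<Longrightarrow> tensor_rep \<rho> \<sigma> g \<in> unitary_set"
    unfolding tensor_rep_def using rep_unitary[OF rep] rep_unitary[OF rs] kron_unitary by blast
  have relT: "adjoint_mat (tensor_rep \<rho> \<sigma> g) ** kron U W ** tensor_rep \<rho> \<sigma> g
        = scal_mat (chiV G \<rho> V g * chiV G \<sigma> Q g) (kron U W)
      \<and> cmod (chiV G \<rho> V g * chiV G \<sigma> Q g) = 1" if g: "g \<in> carrier G" for g
  proof -
    have a: "adjoint_mat (\<rho> g) ** U ** \<rho> g = scal_mat (chiV G \<rho> V g) U \<and> cmod (chiV G \<rho> V g) = 1"
      by (rule chi_char[OF V U(3) g rep_unitary[OF rep g]])
    have b: "adjoint_mat (\<sigma> g) ** W ** \<sigma> g = scal_mat (chiV G \<sigma> Q g) W \<and> cmod (chiV G \<sigma> Q g) = 1"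
      by (rule chi_char[OF Q W(3) g rep_unitary[OF rs g]])
    have "adjoint_mat (tensor_rep \<rho> \<sigma> g) ** kron U W ** tensor_rep \<rho> \<sigma> g
        = kron (adjoint_mat (\<rho> g) ** U ** \<rho> g) (adjoint_mat (\<sigma> g) ** W ** \<sigma> g)"
      unfolding tensor_rep_def by (simp add: kron_adj kron_mul)
    also have "\<dots> = scal_mat (chiV G \<rho> V g * chiV G \<sigma> Q g) (kron U W)"
      using a b by (simp add: kron_scal)
    finally show ?thesis using a b by (simp add: norm_mult)
  qed
  have mem: "ptensor V Q \<in> sym_PU G (tensor_rep \<rho> \<sigma>)"
    unfolding eq using KU Ru relT by (intro sym_PU_mem) blast+
  have "\<forall>g\<in>carrier G. chiV G (tensor_rep \<rho> \<sigma>) (ptensor V Q) g = chiV G \<rho> V g * chiV G \<sigma> Q g"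
  proof
    fix g assume g: "g \<in> carrier G"
    have KV: "kron U W \<in> ptensor V Q" unfolding eq by (rule pclass_self)
    have "scal_mat (chiV G (tensor_rep \<rho> \<sigma>) (ptensor V Q) g) (kron U W)
        = scal_mat (chiV G \<rho> V g * chiV G \<sigma> Q g) (kron U W)"
      using chi_char[OF mem KV g Ru[OF g]] relT[OF g] by simp
    then show "chiV G (tensor_rep \<rho> \<sigma>) (ptensor V Q) g = chiV G \<rho> V g * chiV G \<sigma> Q g"
      by (rule scal_cancel) (rule unitary_ne0[OF KU])
  qed
  with mem show ?thesis by blast
qed

lemma one_sym:
  fixes \<sigma> :: "'g \<Rightarrow> complex^'m^'m"
  assumes rs: "unitary_rep G T \<sigma>"
  shows "pclass (mat 1) \<in> sym_PU G \<sigma> \<and> (\<forall>g\<in>carrier G. chiV G \<sigma> (pclass (mat 1)) g = 1)"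
proof -
  have rel: "adjoint_mat (\<sigma> g) ** (mat 1 :: complex^'m^'m) ** \<sigma> g = scal_mat 1 (mat 1)" if g: "g \<in> carrier G" for g
    using rep_unitary[OF rs g] by (simp add: unitary_set_def)
  have mem: "pclass (mat 1) \<in> sym_PU G \<sigma>"
    using unitary_one rep_unitary[OF rs] rel by (intro sym_PU_mem) (auto intro!: exI[of _ 1])
  have "\<forall>g\<in>carrier G. chiV G \<sigma> (pclass (mat 1)) g = 1"
  proof
    fix g assume g: "g \<in> carrier G"
    have "scal_mat (chiV G \<sigma> (pclass (mat 1)) g) (mat 1 :: complex^'m^'m) = scal_mat 1 (mat 1)"
      using conjunct1[OF chi_char[OF mem pclass_self g rep_unitary[OF rs g]]] rel[OF g] by (rule trans[OF sym])
    then show "chiV G \<sigma> (pclass (mat 1)) g = 1"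
      by (rule scal_cancel) (rule mat1_ne0)
  qed
  with mem show ?thesis by blast
qed


definition diagm :: "('k::finite \<Rightarrow> complex) \<Rightarrow> complex^'k^'k" where
  "diagm d = (\<chi> i j. if i = j then d i else 0)"

lemma diagm_mul_left: "diagm d ** X = (\<chi> i j. d i * X $ i $ j)"
proof -
  have "\<And>i j. (\<Sum>k\<in>UNIV. (if i = k then d i else 0) * X $ k $ j) = d i * X $ i $ j"
    by (simp add: if_distrib[of "\<lambda>x. x * _"] sum.delta cong: if_cong)
  then show ?thesis by (simp add: vec_eq_iff mmult_nth diagm_def)
qed

lemma diagm_mul_right: "X ** diagm d = (\<chi> i j. X $ i $ j * d j)"
proof -
  have "\<And>i j. (\<Sum>k\<in>UNIV. X $ i $ k * (if k = j then d k else 0)) = X $ i $ j * d j"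
    by (simp add: if_distrib[of "\<lambda>x. _ * x"] sum.delta' cong: if_cong)
  then show ?thesis by (simp add: vec_eq_iff mmult_nth diagm_def)
qed

lemma diagm_adj: "adjoint_mat (diagm d) = diagm (\<lambda>i. cnj (d i))"
  by (auto simp: vec_eq_iff diagm_def)

lemma cnj_mult_unit2: "cmod c = 1 \<Longrightarrow> c * cnj c = 1"
  using cnj_mult_unit[of c] by (simp add: mult.commute)

lemma diagm_unitary: "(\<And>i. cmod (d i) = 1) \<Longrightarrow> diagm d \<in> unitary_set"
proof -
  assume d: "\<And>i. cmod (d i) = 1"
  have "adjoint_mat (diagm d) ** diagm d = mat 1"
    unfolding diagm_adj diagm_mul_left using d by (auto simp: vec_eq_iff diagm_def mat_def cnj_mult_unit)
  moreover have "diagm d ** adjoint_mat (diagm d) = mat 1"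
    unfolding diagm_adj diagm_mul_left using d by (auto simp: vec_eq_iff diagm_def mat_def cnj_mult_unit2)
  ultimately show ?thesis unfolding unitary_set_def by simp
qed

lemma diag_powers_eq: "diag_powers_rep e \<psi> g = diagm (\<lambda>i. \<psi> g ^ e i)"
  by (simp add: diag_powers_rep_def diagm_def)

lemma sucmod_inj: "a < n \<Longrightarrow> b < (n::nat) \<Longrightarrow> Suc a mod n = Suc b mod n \<Longrightarrow> a = b"
proof -
  assume a: "a < n" and b: "b < n" and eq: "Suc a mod n = Suc b mod n"
  have "Suc a = n \<or> Suc a < n" "Suc b = n \<or> Suc b < n" using a b by auto
  then show ?thesis using eq by auto
qed

lemma root_shift:
  fixes z :: complex
  assumes z: "cmod z = 1" and zn: "z ^ n = 1" and a: "a < n"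
  shows "cnj (z ^ a) * z ^ (Suc a mod n) = z"
proof -
  have "cnj (z ^ a) * z ^ a = (cnj z * z) ^ a" by (simp add: power_mult_distrib)
  then have u: "cnj (z ^ a) * z ^ a = 1" using cnj_mult_unit[OF z] by simp
  show ?thesis
  proof (cases "Suc a < n")
    case True
    then have "z ^ (Suc a mod n) = z ^ a * z" by simp
    then have "cnj (z ^ a) * z ^ (Suc a mod n) = (cnj (z ^ a) * z ^ a) * z" by (simp only: mult.assoc)
    then show ?thesis using u by (simp only: mult_1_left)
  next
    case False
    then have n: "n = Suc a" using a by simp
    then have "z ^ a * z = 1" using zn by (simp add: mult.commute)
    then have "cnj (z ^ a) = cnj (z ^ a) * (z ^ a * z)" by (simp only: mult_1_right)
    also have "\<dots> = (cnj (z ^ a) * z ^ a) * z" by (simp only: mult.assoc)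
    also have "\<dots> = z" using u by (simp only: mult_1_left)
    finally have "cnj (z ^ a) = z" .
    then show ?thesis using n by simp
  qed
qed

lemma torsion_part:
  fixes \<psi> :: "'g \<Rightarrow> complex" and e :: "'k::finite \<Rightarrow> nat"
  assumes chr: "character G T \<psi>" and fo: "finite_order_char G \<psi>" and co: "char_order G \<psi> = CARD('k)"
    and be: "bij_betw e UNIV {..<CARD('k)}"
  shows "\<exists>V\<in>sym_PU G (diag_powers_rep e \<psi>). \<forall>g\<in>carrier G. chiV G (diag_powers_rep e \<psi>) V g = \<psi> g"
proof -
  define n where "n = CARD('k)"
  have npos: "n > 0" by (simp add: n_def)
  have "\<exists>m::nat. m > 0 \<and> (\<forall>g\<in>carrier G. \<psi> g ^ m = 1)" using fo unfolding finite_order_char_def .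
  from LeastI_ex[OF this] have pow: "\<forall>g\<in>carrier G. \<psi> g ^ n = 1"
    using co unfolding char_order_def n_def by simp
  have unit: "\<forall>g\<in>carrier G. cmod (\<psi> g) = 1" using chr unfolding character_def by blast
  have eless: "e i < n" for i using be unfolding bij_betw_def n_def by auto
  have inj: "inj e" using be unfolding bij_betw_def by blast
  define ei where "ei = inv_into UNIV e"
  have e_ei: "e (ei a) = a" if "a < n" for a
  proof -
    have "a \<in> e ` UNIV" using be that unfolding bij_betw_def n_def by auto
    then show ?thesis unfolding ei_def by (rule f_inv_into_f)
  qed
  define f where "f i = ei (Suc (e i) mod n)" for i
  have ef: "e (f i) = Suc (e i) mod n" for i using e_ei npos unfolding f_def by simp
  have finj: "i = j" if "f i = f j" for i j
  proof -
    have "Suc (e i) mod n = Suc (e j) mod n" using ef[of i] ef[of j] that by simp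
    then have "e i = e j" using sucmod_inj eless by blast
    then show ?thesis using inj by (simp add: inj_eq)
  qed
  define S :: "complex^'k^'k" where "S = (\<chi> i j. if j = f i then 1 else 0)"
  have SS: "S ** adjoint_mat S = mat 1"
  proof -
    have "\<And>i j. (\<Sum>k\<in>UNIV. (if k = f i then 1 else 0) * cnj (if k = f j then 1 else (0::complex)))
          = (if f i = f j then 1 else 0)"
      by (simp add: if_distrib[of "\<lambda>x. x * _"] sum.delta' cong: if_cong)
    then show ?thesis using finj by (auto simp: vec_eq_iff mmult_nth S_def mat_def)
  qed
  then have Su: "S \<in> unitary_set"
    unfolding unitary_set_def using matrix_left_right_inverse by blast
  have Du: "diag_powers_rep e \<psi> g \<in> unitary_set" if g: "g \<in> carrier G" for g
    unfolding diag_powers_eq using unit g by (intro diagm_unitary) (simp add: norm_power)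
  have rel: "adjoint_mat (diag_powers_rep e \<psi> g) ** S ** diag_powers_rep e \<psi> g = scal_mat (\<psi> g) S"
    if g: "g \<in> carrier G" for g
  proof -
    have "\<And>i j. cnj (\<psi> g ^ e i) * S $ i $ j * \<psi> g ^ e j = \<psi> g * S $ i $ j"
    proof -
      fix i j
      show "cnj (\<psi> g ^ e i) * S $ i $ j * \<psi> g ^ e j = \<psi> g * S $ i $ j"
      proof (cases "j = f i")
        case True
        then have "cnj (\<psi> g ^ e i) * \<psi> g ^ e j = \<psi> g"
          using root_shift[of "\<psi> g" n "e i"] unit pow g eless ef by simp
        then show ?thesis using True by (simp add: S_def)
      qed (simp add: S_def)
    qed
    then show ?thesis
      unfolding diag_powers_eq diagm_adj diagm_mul_left diagm_mul_right
      by (simp add: vec_eq_iff)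
  qed
  have mem: "pclass S \<in> sym_PU G (diag_powers_rep e \<psi>)"
    using Su Du rel unit by (intro sym_PU_mem) blast+
  have "\<forall>g\<in>carrier G. chiV G (diag_powers_rep e \<psi>) (pclass S) g = \<psi> g"
  proof
    fix g assume g: "g \<in> carrier G"
    have "scal_mat (chiV G (diag_powers_rep e \<psi>) (pclass S) g) S = scal_mat (\<psi> g) S"
      using conjunct1[OF chi_char[OF mem pclass_self g Du[OF g]]] rel[OF g] by (rule trans[OF sym])
    then show "chiV G (diag_powers_rep e \<psi>) (pclass S) g = \<psi> g"
      by (rule scal_cancel) (rule unitary_ne0[OF Su])
  qed
  with mem show ?thesis by blast
qed


lemma topspace_U_top[simp]: "topspace U_top = unitary_set"
  by (simp add: U_top_def)

lemma openin_U_top: "openin U_top S \<longleftrightarrow> (\<exists>T. open T \<and> S = T \<inter> unitary_set)"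
  by (simp add: U_top_def openin_subtopology)

lemma PU_istop: "istopology (\<lambda>S::(complex^'n^'n) set set. S \<subseteq> PU_set \<and> openin U_top {U \<in> unitary_set. pclass U \<in> S})"
  unfolding istopology_def
proof (rule conjI; (intro allI impI)?)
  fix S T :: "(complex^'n^'n) set set" assume S: "S \<subseteq> PU_set \<and> openin U_top {U \<in> unitary_set. pclass U \<in> S}"
    and T: "T \<subseteq> PU_set \<and> openin U_top {U \<in> unitary_set. pclass U \<in> T}"
  have "{U \<in> unitary_set. pclass U \<in> S \<inter> T} = {U \<in> unitary_set. pclass U \<in> S} \<inter> {U \<in> unitary_set. pclass U \<in> T}"
    by blast
  then show "S \<inter> T \<subseteq> PU_set \<and> openin U_top {U \<in> unitary_set. pclass U \<in> S \<inter> T}"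
    using S T by (simp add: openin_Int le_infI1)
next
  fix K :: "(complex^'n^'n) set set set" assume K: "\<forall>S\<in>K. S \<subseteq> PU_set \<and> openin U_top {U \<in> unitary_set. pclass U \<in> S}"
  have "{U \<in> unitary_set. pclass U \<in> \<Union>K} = \<Union> ((\<lambda>S. {U \<in> unitary_set. pclass U \<in> S}) ` K)"
    by blast
  moreover have "openin U_top (\<Union> ((\<lambda>S. {U \<in> unitary_set. pclass U \<in> S}) ` K))"
    using K by (intro openin_Union) blast
  ultimately show "\<Union>K \<subseteq> PU_set \<and> openin U_top {U \<in> unitary_set. pclass U \<in> \<Union>K}"
    using K by auto
qed

lemma openin_PU: "openin PU_top S \<longleftrightarrow> S \<subseteq> PU_set \<and> openin U_top {U \<in> unitary_set. pclass U \<in> S}"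
  unfolding PU_top_def topology_inverse'[OF PU_istop] ..

lemma topspace_PU[simp]: "topspace (PU_top::(complex^'n^'n) set topology) = PU_set"
proof -
  have "openin (PU_top::(complex^'n^'n) set topology) PU_set"
  proof -
    have "{U \<in> (unitary_set::(complex^'n^'n) set). pclass U \<in> PU_set} = topspace U_top" using pclass_in_PU by auto
    then show ?thesis unfolding openin_PU using openin_topspace[of U_top] by simp
  qed
  then have "PU_set \<subseteq> topspace (PU_top::(complex^'n^'n) set topology)" by (rule openin_subset)
  moreover have "topspace (PU_top::(complex^'n^'n) set topology) \<subseteq> PU_set"
    using openin_PU openin_topspace by blast
  ultimately show ?thesis by blast
qed

lemma pclass_cont: "continuous_map U_top PU_top pclass"
  unfolding continuous_map using pclass_in_PU openin_PU by auto

lemma scal_inj: "scal_mat a X = scal_mat a Y \<Longrightarrow> a \<noteq> 0 \<Longrightarrow> X = Y"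
  by (simp add: vec_eq_iff)

lemma rel_scal_iff:
  assumes "a \<noteq> 0"
  shows "(adjoint_mat R ** scal_mat a U ** R = scal_mat c (scal_mat a U)) \<longleftrightarrow> (adjoint_mat R ** U ** R = scal_mat c U)"
proof -
  have "scal_mat c (scal_mat a U) = scal_mat a (scal_mat c U)" by (simp add: scal_scal mult.commute)
  then show ?thesis using scal_inj[OF _ assms] by (auto simp: conj_scal)
qed

definition Sc :: "('g \<Rightarrow> complex^'n^'n) \<Rightarrow> 'g \<Rightarrow> complex \<Rightarrow> (complex^'n^'n) set set" where
  "Sc \<rho> g c = {V \<in> PU_set. \<forall>U\<in>V. adjoint_mat (\<rho> g) ** U ** \<rho> g = scal_mat c U}"

lemma Sc_pclass:
  assumes "U \<in> unitary_set"
  shows "pclass U \<in> Sc \<rho> g c \<longleftrightarrow> adjoint_mat (\<rho> g) ** U ** \<rho> g = scal_mat c U"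
proof
  assume "pclass U \<in> Sc \<rho> g c" then show "adjoint_mat (\<rho> g) ** U ** \<rho> g = scal_mat c U"
    unfolding Sc_def using pclass_self by blast
next
  assume r: "adjoint_mat (\<rho> g) ** U ** \<rho> g = scal_mat c U"
  have "adjoint_mat (\<rho> g) ** X ** \<rho> g = scal_mat c X" if X: "X \<in> pclass U" for X
  proof -
    obtain a where a: "cmod a = 1" "X = scal_mat a U" using pclass_mem[OF X] by blast
    then have "a \<noteq> 0" by auto
    then show ?thesis using rel_scal_iff[of a "\<rho> g" U c] r a by simp
  qed
  then show "pclass U \<in> Sc \<rho> g c" unfolding Sc_def using pclass_in_PU[OF assms] by blast
qed

lemma Sc_closed:
  fixes \<rho> :: "'g \<Rightarrow> complex^'n^'n"
  shows "closedin PU_top (Sc \<rho> g c)"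
proof -
  have sub: "Sc \<rho> g c \<subseteq> PU_set" unfolding Sc_def by blast
  have eq: "{U \<in> unitary_set. pclass U \<in> PU_set - Sc \<rho> g c}
      = {U. adjoint_mat (\<rho> g) ** U ** \<rho> g \<noteq> scal_mat c U} \<inter> unitary_set"
  proof (rule Set.set_eqI)
    fix U
    show "U \<in> {U \<in> unitary_set. pclass U \<in> PU_set - Sc \<rho> g c} \<longleftrightarrow> U \<in> {U. adjoint_mat (\<rho> g) ** U ** \<rho> g \<noteq> scal_mat c U} \<inter> unitary_set"
      using Sc_pclass[of U \<rho> g c] pclass_in_PU[of U] by auto
  qed
  have "open {U. adjoint_mat (\<rho> g) ** U ** \<rho> g \<noteq> scal_mat c U}"
    by (intro open_Collect_neq cont_mmult cont_scal continuous_on_id continuous_on_const)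
  then have "openin PU_top (PU_set - Sc \<rho> g c)"
    unfolding openin_PU eq openin_U_top by blast
  then show ?thesis unfolding closedin_def using sub by simp
qed


lemma sym_sub_PU: "sym_PU G \<rho> \<subseteq> PU_set"
  unfolding sym_PU_def by blast

lemma sym_Sc_iff:
  fixes \<rho> :: "'g \<Rightarrow> complex^'n^'n"
  assumes rep: "unitary_rep G T \<rho>" and V: "V \<in> sym_PU G \<rho>" and g: "g \<in> carrier G"
  shows "V \<in> Sc \<rho> g c \<longleftrightarrow> chiV G \<rho> V g = c"
proof
  have VPU: "V \<in> PU_set" using V sym_sub_PU by blast
  have U: "(SOME U. U \<in> V) \<in> V" by (rule PU_some[OF VPU])
  assume "V \<in> Sc \<rho> g c"
  then have "adjoint_mat (\<rho> g) ** (SOME U. U \<in> V) ** \<rho> g = scal_mat c (SOME U. U \<in> V)"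
    unfolding Sc_def using U by blast
  moreover have "adjoint_mat (\<rho> g) ** (SOME U. U \<in> V) ** \<rho> g = scal_mat (chiV G \<rho> V g) (SOME U. U \<in> V)"
    using chi_char[OF V U g rep_unitary[OF rep g]] by blast
  ultimately have "scal_mat (chiV G \<rho> V g) (SOME U. U \<in> V) = scal_mat c (SOME U. U \<in> V)" by simp
  then show "chiV G \<rho> V g = c" using scal_cancel unitary_ne0[OF PU_mem_unitary[OF VPU U]] by blast
next
  assume "chiV G \<rho> V g = c"
  then have "adjoint_mat (\<rho> g) ** U ** \<rho> g = scal_mat c U" if U: "U \<in> V" for U
    using conjunct1[OF chi_char[OF V U g rep_unitary[OF rep g]]] by simp
  moreover have "V \<in> PU_set" using V sym_sub_PU by blast
  ultimately show "V \<in> Sc \<rho> g c" unfolding Sc_def by blast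
qed

lemma path_imp_chi:
  fixes \<rho> :: "'g \<Rightarrow> complex^'n^'n"
  assumes rep: "unitary_rep G T \<rho>"
    and V: "V \<in> sym_PU G \<rho>" and W: "W \<in> sym_PU G \<rho>"
    and pc: "path_component_of (subtopology PU_top (sym_PU G \<rho>)) V W"
    and g: "g \<in> carrier G"
  shows "chiV G \<rho> V g = chiV G \<rho> W g"
proof -
  define X where "X = subtopology (PU_top::(complex^'n^'n) set topology) (sym_PU G \<rho>)"
  have topX: "topspace X = sym_PU G \<rho>" unfolding X_def using sym_sub_PU by auto
  define c0 where "c0 = chiV G \<rho> V g"
  define R where "R = {z::complex. z ^ CARD('n) = 1} - {c0}"
  have finR: "finite R" unfolding R_def by (intro finite_Diff finite_roots_unity) simp
  define A where "A = sym_PU G \<rho> \<inter> Sc \<rho> g c0"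
  define B where "B = \<Union> ((\<lambda>c. sym_PU G \<rho> \<inter> Sc \<rho> g c) ` R)"
  have clA: "closedin X A" unfolding A_def X_def
    by (rule closedin_subtopology_Int_closed[OF Sc_closed])
  have clB: "closedin X B" unfolding B_def
  proof (rule closedin_Union)
    show "finite ((\<lambda>c. sym_PU G \<rho> \<inter> Sc \<rho> g c) ` R)" using finR by simp
    fix S assume "S \<in> (\<lambda>c. sym_PU G \<rho> \<inter> Sc \<rho> g c) ` R"
    then obtain c where "S = sym_PU G \<rho> \<inter> Sc \<rho> g c" by blast
    then show "closedin X S" unfolding X_def
      using closedin_subtopology_Int_closed[OF Sc_closed] by simp
  qed
  have AB: "A = topspace X - B"
  proof (rule Set.set_eqI)
    fix V' show "V' \<in> A \<longleftrightarrow> V' \<in> topspace X - B"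
    proof (cases "V' \<in> sym_PU G \<rho>")
      case True
      have pw: "chiV G \<rho> V' g ^ CARD('n) = 1" using chi_finite_order[OF rep True] g by blast
      have iff: "\<And>c. V' \<in> Sc \<rho> g c \<longleftrightarrow> chiV G \<rho> V' g = c" by (rule sym_Sc_iff[OF rep True g])
      have "V' \<in> A \<longleftrightarrow> chiV G \<rho> V' g = c0" unfolding A_def using iff True by simp
      moreover have "V' \<in> B \<longleftrightarrow> chiV G \<rho> V' g \<in> R" unfolding B_def using iff True by simp
      ultimately show ?thesis unfolding topX R_def using True pw by simp
    next
      case False
      then show ?thesis unfolding A_def topX by blast
    qed
  qed
  then have opA: "openin X A" using clB by (simp add: openin_diff)
  obtain \<gamma> where \<gamma>: "pathin X \<gamma>" "\<gamma> 0 = V" "\<gamma> 1 = W" using pc unfolding path_component_of_def X_def by blast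
  define I where "I = \<gamma> ` {0..1}"
  have cI: "connectedin X I" unfolding I_def by (rule connectedin_path_image[OF \<gamma>(1)])
  then have IX: "I \<subseteq> topspace X" by (rule connectedin_subset_topspace)
  have cs: "connected_space (subtopology X I)" using cI by (simp add: connectedin_def)
  have "openin (subtopology X I) (I \<inter> A)" using opA by (rule openin_subtopology_Int2)
  moreover have "closedin (subtopology X I) (I \<inter> A)" using clA by (rule closedin_subtopology_Int_closed)
  ultimately have "I \<inter> A = {} \<or> I \<inter> A = topspace (subtopology X I)"
    using connected_space_clopen_in[THEN iffD1, OF cs, rule_format, OF conjI] by blast
  moreover have "V \<in> I \<inter> A"
  proof -
    have "V \<in> I" unfolding I_def using \<gamma>(2) by force
    moreover have "V \<in> A" unfolding A_def using sym_Sc_iff[OF rep V g] V c0_def by simp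
    ultimately show ?thesis by blast
  qed
  ultimately have "I \<inter> A = I" using IX by auto
  moreover have "W \<in> I" unfolding I_def using \<gamma>(3) by force
  ultimately have "W \<in> A" by blast
  then show ?thesis using sym_Sc_iff[OF rep W g] unfolding A_def c0_def by simp
qed


definition cip :: "complex^'n \<Rightarrow> complex^'n \<Rightarrow> complex" where
  "cip x y = (\<Sum>i\<in>UNIV. cnj (x $ i) * y $ i)"

lemma inner_cip: "inner x y = Re (cip x y)"
  by (simp add: inner_vec_def cip_def inner_complex_def Re_sum)

lemma mv_nth: "(A *v x) $ i = (\<Sum>j\<in>UNIV. A $ i $ j * x $ j)"
  by (simp add: matrix_vector_mult_def)

lemma cip_adj: "cip (A *v x) y = cip x (adjoint_mat A *v y)"
proof -
  have "cip (A *v x) y = (\<Sum>i\<in>UNIV. \<Sum>j\<in>UNIV. cnj (A $ i $ j) * cnj (x $ j) * y $ i)"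
    by (simp add: cip_def mv_nth cnj_sum sum_distrib_right)
  also have "\<dots> = (\<Sum>j\<in>UNIV. \<Sum>i\<in>UNIV. cnj (A $ i $ j) * cnj (x $ j) * y $ i)"
    by (rule sum.swap)
  also have "\<dots> = cip x (adjoint_mat A *v y)"
    by (simp add: cip_def mv_nth sum_distrib_left mult_ac)
  finally show ?thesis .
qed

lemma cip_unitary: "M \<in> unitary_set \<Longrightarrow> cip (M *v x) (M *v y) = cip x y"
  by (simp add: cip_adj matrix_vector_mul_assoc unitary_set_def)

lemma norm_unitary: "M \<in> unitary_set \<Longrightarrow> norm (M *v x) = norm (x::complex^'n)"
proof -
  assume M: "M \<in> unitary_set"
  have "inner (M *v x) (M *v x) = inner x x" by (simp add: inner_cip cip_unitary[OF M])
  then show ?thesis by (simp add: norm_eq_sqrt_inner)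
qed

lemma cip_smult_l: "cip (c *s x) y = cnj c * cip x y"
  by (simp add: cip_def sum_distrib_left mult_ac)
lemma cip_smult_r: "cip x (c *s y) = c * cip x y"
  by (simp add: cip_def sum_distrib_left mult_ac)

lemma eig_orth:
  assumes M: "M \<in> unitary_set" and x: "M *v x = a *s x" and y: "M *v y = b *s y"
    and a: "cmod a = 1" and ab: "a \<noteq> b"
  shows "cip x y = 0"
proof (rule ccontr)
  assume ne: "cip x y \<noteq> 0"
  have "cip x y = cip (M *v x) (M *v y)" using cip_unitary[OF M, of x y] by simp
  also have "\<dots> = cip (a *s x) (b *s y)" using x y by simp
  also have "\<dots> = cnj a * b * cip x y" by (simp add: cip_smult_l cip_smult_r mult_ac)
  finally have "cip x y = cnj a * b * cip x y" .
  then have "cnj a * b = 1" using ne by simp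
  have "b = (cnj a * a) * b" using cnj_mult_unit[OF a] by simp
  also have "\<dots> = a * (cnj a * b)" by (simp only: mult_ac)
  also have "\<dots> = a" using \<open>cnj a * b = 1\<close> by simp
  finally have "b = a" .
  then show False using ab by simp
qed

lemma unit_circle_infinite: "infinite {z::complex. cmod z = 1}"
proof
  assume fin: "finite {z::complex. cmod z = 1}"
  define f where "f t = Complex t (sqrt (1 - t\<^sup>2))" for t
  have "f ` {-1..1} \<subseteq> {z. cmod z = 1}"
  proof
    fix z assume "z \<in> f ` {-1..1}"
    then obtain t where t: "t \<in> {-1..1}" "z = f t" by blast
    then have "\<bar>t\<bar> \<le> 1" by auto
    then have "t\<^sup>2 \<le> 1" by (simp add: abs_square_le_1)
    then show "z \<in> {z. cmod z = 1}" using t by (simp add: f_def cmod_def)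
  qed
  then have "finite (f ` {-1..1})" using fin finite_subset by blast
  moreover have "inj_on f {-1..1}" unfolding inj_on_def f_def by simp
  ultimately have "finite {-1..1::real}" using finite_imageD by blast
  then show False using infinite_Icc[of "-1::real" 1] by simp
qed

lemma exists_no_eig:
  fixes M :: "complex^'n^'n"
  assumes M: "M \<in> unitary_set"
  shows "\<exists>a. cmod a = 1 \<and> (\<forall>x. M *v x = a *s x \<longrightarrow> x = 0)"
proof (rule ccontr)
  assume H: "\<not> ?thesis"
  have ex: "\<exists>x. x \<noteq> 0 \<and> M *v x = a *s x" if a1: "cmod a = 1" for a
  proof (rule ccontr)
    assume "\<not> (\<exists>x. x \<noteq> 0 \<and> M *v x = a *s x)"
    then have "\<forall>x. M *v x = a *s x \<longrightarrow> x = 0" by blast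
    with a1 H show False by blast
  qed
  define C where "C = {z::complex. cmod z = 1}"
  define f where "f a = (SOME x. x \<noteq> 0 \<and> M *v x = a *s x)" for a
  have f: "f a \<noteq> 0 \<and> M *v f a = a *s f a" if "a \<in> C" for a
  proof -
    have "\<exists>x. x \<noteq> 0 \<and> M *v x = a *s x" using that unfolding C_def by (intro ex) simp
    then show ?thesis unfolding f_def by (rule someI_ex)
  qed
  have inj: "inj_on f C"
  proof (rule inj_onI)
    fix a b assume a: "a \<in> C" and b: "b \<in> C" and eq: "f a = f b"
    have "a *s f a = M *v f a" using f[OF a] by simp
    also have "\<dots> = M *v f b" using eq by simp
    also have "\<dots> = b *s f b" using f[OF b] by simp
    also have "\<dots> = b *s f a" using eq by simp
    finally have e: "a *s f a = b *s f a" .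
    obtain i where i: "f a $ i \<noteq> 0" using f[OF a] by (auto simp: vec_eq_iff)
    have "a * f a $ i = b * f a $ i" using arg_cong[where f="\<lambda>v. v $ i", OF e] by simp
    then show "a = b" using i by simp
  qed
  have orth: "pairwise orthogonal (f ` C)"
  proof (rule pairwiseI)
    fix x y assume "x \<in> f ` C" "y \<in> f ` C" "x \<noteq> y"
    then obtain a b where ab: "a \<in> C" "b \<in> C" "x = f a" "y = f b" "a \<noteq> b" by blast
    have "cip x y = 0" using eig_orth[OF M, of x a y b] f[OF ab(1)] f[OF ab(2)] ab C_def by simp
    then show "orthogonal x y" by (simp add: orthogonal_def inner_cip)
  qed
  have "0 \<notin> f ` C"
  proof
    assume "0 \<in> f ` C"
    then obtain a where "a \<in> C" "f a = 0" by force
    then show False using f[of a] by simp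
  qed
  then have "independent (f ` C)" by (rule pairwise_orthogonal_independent[OF orth])
  then have "finite (f ` C)" using independent_bound by auto
  then have "finite C" by (rule finite_imageD[OF _ inj])
  then show False using unit_circle_infinite C_def by simp
qed


lemma mv_scal: "scal_mat c A *v x = c *s (A *v x)"
  by (simp add: vec_eq_iff mv_nth sum_distrib_left mult.assoc)

lemma madd_rdistrib: "(A + B) ** (C::complex^'n^'n) = A ** C + B ** C"
  by (simp add: vec_eq_iff mmult_nth distrib_right sum.distrib)

lemma adj_add: "adjoint_mat (A + B) = adjoint_mat A + adjoint_mat B"
  by (simp add: vec_eq_iff)

lemma scal_add_l: "scal_mat (c + d) A = scal_mat c A + scal_mat d A"
  by (simp add: vec_eq_iff distrib_right)
lemma scal_add_r: "scal_mat c (A + B) = scal_mat c A + scal_mat c B"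
  by (simp add: vec_eq_iff distrib_left)

lemma ofreal_smult: "(of_real a :: complex) *s v = a *\<^sub>R v"
proof (rule vec_eq_iff[THEN iffD2], rule allI)
  fix i
  show "((of_real a :: complex) *s v) $ i = (a *\<^sub>R v) $ i"
    by (subst vector_scaleR_component) (simp add: scaleR_conv_of_real)
qed

definition lin :: "real \<Rightarrow> real \<Rightarrow> complex^'n^'n \<Rightarrow> complex^'n^'n" where
  "lin a b K = scal_mat (of_real a) (mat 1) + scal_mat (of_real b) K"

lemma lin_mv: "lin a b K *v x = a *\<^sub>R x + b *\<^sub>R (K *v x)"
  by (simp add: lin_def matrix_vector_mult_add_rdistrib mv_scal ofreal_smult)

lemma lin_comm: "K ** R = R ** K \<Longrightarrow> lin a b K ** R = R ** lin a b K"
  by (simp add: lin_def madd_rdistrib matrix_add_ldistrib scal_mul_left scal_mul_right)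

lemma lin_adj: "adjoint_mat (lin a b K) = lin a b (adjoint_mat K)"
  by (simp add: lin_def adj_add adj_scal)

lemma lin_adj_lin:
  assumes K: "K \<in> unitary_set"
  shows "adjoint_mat (lin a b K) ** lin a b K
     = scal_mat (of_real (a*a + b*b)) (mat 1) + scal_mat (of_real (a*b)) (K + adjoint_mat K)"
proof -
  have KK: "adjoint_mat K ** K = mat 1" using K by (simp add: unitary_set_def)
  show ?thesis
    unfolding lin_adj unfolding lin_def
    by (simp add: madd_rdistrib matrix_add_ldistrib scal_mul_left scal_mul_right scal_scal scal_add_l scal_add_r KK add_ac mult_ac)
qed

lemma lin_swap_adj:
  assumes K: "K \<in> unitary_set"
  shows "adjoint_mat (lin a b K) ** lin a b K = adjoint_mat (lin b a K) ** lin b a K"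
  unfolding lin_adj_lin[OF K] by (simp add: add.commute mult.commute)

lemma C_inj:
  fixes K :: "complex^'n^'n"
  assumes K: "K \<in> unitary_set" and nm: "\<forall>x. K *v x = - x \<longrightarrow> x = 0"
    and t: "0 \<le> t" "t \<le> 1" and x: "lin (1+t) (1-t) K *v x = 0"
  shows "x = 0"
proof (rule ccontr)
  assume xne: "x \<noteq> 0"
  have x2: "(1+t) *\<^sub>R x + (1-t) *\<^sub>R (K *v x) = 0" using x unfolding lin_mv .
  have e: "(1-t) *\<^sub>R (K *v x) = - ((1+t) *\<^sub>R x)"
    using x2 by (simp only: add_eq_0_iff)
  have "(1-t) * norm x = norm ((1-t) *\<^sub>R (K *v x))"
    using norm_unitary[OF K, of x] t by simp
  also have "\<dots> = norm (- ((1+t) *\<^sub>R x))" by (simp only: e)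
  also have "\<dots> = (1+t) * norm x"
    using t by simp
  finally have eq: "(1-t) * norm x = (1+t) * norm x" .
  have "t * norm x = 0" using eq by (simp add: algebra_simps)
  then have "t = 0" using xne by simp
  then have "K *v x = - x" using e by simp
  then show False using nm xne by blast
qed

definition Dinv :: "complex^'n^'n \<Rightarrow> complex^'n^'n" where
  "Dinv C = (SOME D. D ** C = mat 1)"

lemma Dinv_props:
  fixes C :: "complex^'n^'n"
  assumes "\<forall>x. C *v x = 0 \<longrightarrow> x = 0"
  shows "Dinv C ** C = mat 1 \<and> C ** Dinv C = mat 1"
proof -
  have "\<exists>D. D ** C = mat 1" using assms matrix_left_invertible_ker by blast
  then have "Dinv C ** C = mat 1" unfolding Dinv_def by (rule someI_ex)
  then show ?thesis using matrix_left_right_inverse by blast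
qed

lemma solve_unique:
  fixes C D :: "complex^'n^'n"
  assumes "D ** C = mat 1" "C ** D = mat 1"
  shows "Y ** C = B \<longleftrightarrow> Y = B ** D"
proof
  assume "Y ** C = B"
  have "Y = Y ** (C ** D)" using assms(2) by simp
  also have "\<dots> = (Y ** C) ** D" by (simp add: matrix_mul_assoc)
  finally show "Y = B ** D" using \<open>Y ** C = B\<close> by simp
next
  assume "Y = B ** D"
  then have "Y ** C = B ** (D ** C)" by (simp add: matrix_mul_assoc)
  then show "Y ** C = B" using assms(1) by simp
qed


lemma scal_zero: "scal_mat 0 A = 0"
  by (simp add: vec_eq_iff)

lemma unitary_from:
  fixes C D X B :: "complex^'n^'n"
  assumes DC: "D ** C = mat 1" and CD: "C ** D = mat 1" and XC: "X ** C = B"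
    and BB: "adjoint_mat B ** B = adjoint_mat C ** C"
  shows "X \<in> unitary_set"
proof -
  have ADC: "adjoint_mat D ** adjoint_mat C = mat 1"
    using arg_cong[where f=adjoint_mat, OF CD] by (simp add: adj_mul)
  define Z where "Z = adjoint_mat X ** X"
  have h: "adjoint_mat C ** Z ** C = adjoint_mat C ** C"
  proof -
    have "adjoint_mat C ** Z ** C = (adjoint_mat C ** adjoint_mat X) ** (X ** C)"
      unfolding Z_def by (simp add: matrix_mul_assoc)
    also have "\<dots> = adjoint_mat (X ** C) ** (X ** C)" by (simp add: adj_mul)
    also have "\<dots> = adjoint_mat B ** B" using XC by simp
    finally show ?thesis using BB by simp
  qed
  have "Z = (adjoint_mat D ** adjoint_mat C) ** Z ** (C ** D)" using ADC CD by simp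
  also have "\<dots> = adjoint_mat D ** (adjoint_mat C ** Z ** C) ** D" by (simp add: matrix_mul_assoc)
  also have "\<dots> = adjoint_mat D ** (adjoint_mat C ** C) ** D" using h by simp
  also have "\<dots> = (adjoint_mat D ** adjoint_mat C) ** (C ** D)" by (simp add: matrix_mul_assoc)
  also have "\<dots> = mat 1" using ADC CD by simp
  finally have "adjoint_mat X ** X = mat 1" unfolding Z_def .
  moreover then have "X ** adjoint_mat X = mat 1" using matrix_left_right_inverse by blast
  ultimately show ?thesis unfolding unitary_set_def by blast
qed

lemma commute_from:
  fixes C D X B R :: "complex^'n^'n"
  assumes DC: "D ** C = mat 1" and CD: "C ** D = mat 1" and XC: "X ** C = B"
    and CR: "C ** R = R ** C" and BR: "B ** R = R ** B"
  shows "X ** R = R ** X"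
proof -
  have "X ** R = X ** R ** (C ** D)" using CD by simp
  also have "\<dots> = X ** (R ** C) ** D" by (simp add: matrix_mul_assoc)
  also have "\<dots> = X ** (C ** R) ** D" using CR by simp
  also have "\<dots> = (X ** C) ** R ** D" by (simp add: matrix_mul_assoc)
  also have "\<dots> = R ** B ** D" using XC BR by simp
  also have "\<dots> = R ** (X ** C) ** D" using XC by simp
  also have "\<dots> = R ** X ** (C ** D)" by (simp add: matrix_mul_assoc)
  also have "\<dots> = R ** X" using CD by simp
  finally show ?thesis .
qed

definition Xp :: "complex^'n^'n \<Rightarrow> real \<Rightarrow> complex^'n^'n" where
  "Xp K t = lin (1-t) (1+t) K ** Dinv (lin (1+t) (1-t) K)"

lemma Xp_basic:
  fixes K :: "complex^'n^'n"
  assumes K: "K \<in> unitary_set" and nm: "\<forall>x. K *v x = - x \<longrightarrow> x = 0"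
    and t: "0 \<le> t" "t \<le> 1"
  shows "(\<forall>Y. Y ** lin (1+t) (1-t) K = lin (1-t) (1+t) K \<longleftrightarrow> Y = Xp K t)
       \<and> Xp K t \<in> unitary_set
       \<and> (\<forall>R. K ** R = R ** K \<longrightarrow> Xp K t ** R = R ** Xp K t)"
proof -
  define C where "C = lin (1+t) (1-t) K"
  define B where "B = lin (1-t) (1+t) K"
  define D where "D = Dinv C"
  have inj: "\<forall>x. C *v x = 0 \<longrightarrow> x = 0" unfolding C_def using C_inj[OF K nm t] by blast
  have DC: "D ** C = mat 1" and CD: "C ** D = mat 1" using Dinv_props[OF inj] unfolding D_def by auto
  have X: "Xp K t = B ** D" unfolding Xp_def B_def D_def C_def ..
  have uni: "\<forall>Y. Y ** C = B \<longleftrightarrow> Y = Xp K t" unfolding X using solve_unique[OF DC CD] by blast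
  then have XC: "Xp K t ** C = B" by blast
  have BB: "adjoint_mat B ** B = adjoint_mat C ** C" unfolding B_def C_def by (rule lin_swap_adj[OF K])
  have U: "Xp K t \<in> unitary_set" by (rule unitary_from[OF DC CD XC BB])
  have cm: "Xp K t ** R = R ** Xp K t" if KR: "K ** R = R ** K" for R
    using commute_from[OF DC CD XC] lin_comm[OF KR] unfolding C_def B_def by blast
  show ?thesis using uni U cm unfolding C_def B_def by blast
qed

lemma Xp_0:
  fixes K :: "complex^'n^'n"
  assumes K: "K \<in> unitary_set" and nm: "\<forall>x. K *v x = - x \<longrightarrow> x = 0"
  shows "Xp K 0 = mat 1"
proof -
  have all: "\<forall>Y. Y ** lin (1+0) (1-0) K = lin (1-0) (1+0) K \<longleftrightarrow> Y = Xp K 0"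
    using Xp_basic[OF K nm order_refl zero_le_one] by (rule conjunct1)
  have eq: "mat 1 ** lin (1+0) (1-0) K = lin (1-0) (1+0) K" by simp
  have "mat 1 = Xp K 0" by (rule iffD1[OF all[rule_format, of "mat 1"] eq])
  then show ?thesis by simp
qed

lemma Xp_1:
  fixes K :: "complex^'n^'n"
  assumes K: "K \<in> unitary_set" and nm: "\<forall>x. K *v x = - x \<longrightarrow> x = 0"
  shows "Xp K 1 = K"
proof -
  have eq: "K ** lin (1+1) (1-1) K = lin (1-1) (1+1) K"
    by (simp add: lin_def scal_mul_right matrix_add_ldistrib scal_zero)
  have all: "\<forall>Y. Y ** lin (1+1) (1-1) K = lin (1-1) (1+1) K \<longleftrightarrow> Y = Xp K 1"
    using Xp_basic[OF K nm zero_le_one order_refl] by (rule conjunct1)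
  have "K = Xp K 1" by (rule iffD1[OF all[rule_format, of K] eq])
  then show ?thesis by simp
qed


lemma unitary_row_norm:
  assumes U: "(U::complex^'n^'n) \<in> unitary_set"
  shows "norm (U $ i) = 1"
proof -
  have "cip (U $ i) (U $ i) = (U ** adjoint_mat U) $ i $ i"
    by (simp add: cip_def mmult_nth mult.commute)
  also have "\<dots> = 1" using U by (simp add: unitary_set_def mat_def)
  finally have "inner (U $ i) (U $ i) = 1" by (simp add: inner_cip)
  then have "norm (U $ i) ^ 2 = 1" by (simp add: power2_norm_eq_inner)
  then have "norm (U $ i) = 1 \<or> norm (U $ i) = -1" by (simp add: power2_eq_1_iff)
  then show ?thesis using norm_ge_zero[of "U $ i"] by linarith
qed

lemma unitary_norm_le:
  assumes U: "(U::complex^'n^'n) \<in> unitary_set"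
  shows "norm U \<le> real CARD('n)"
proof -
  have "norm U = L2_set (\<lambda>i. norm (U $ i)) UNIV" by (simp add: norm_vec_def)
  also have "\<dots> \<le> (\<Sum>i\<in>UNIV. norm (U $ i))" by (rule L2_set_le_sum) simp
  also have "\<dots> = real CARD('n)" using unitary_row_norm[OF U] by simp
  finally show ?thesis .
qed

lemma unitary_compact: "compact (unitary_set :: (complex^'n^'n) set)"
proof -
  have eq: "(unitary_set :: (complex^'n^'n) set) = {U. adjoint_mat U ** U = mat 1} \<inter> {U. U ** adjoint_mat U = mat 1}"
    unfolding unitary_set_def by blast
  have c1: "closed {U::complex^'n^'n. adjoint_mat U ** U = mat 1}"
    by (rule closed_Collect_eq[OF cont_mmult[OF cont_adj[OF continuous_on_id] continuous_on_id] continuous_on_const])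
  have c2: "closed {U::complex^'n^'n. U ** adjoint_mat U = mat 1}"
    by (rule closed_Collect_eq[OF cont_mmult[OF continuous_on_id cont_adj[OF continuous_on_id]] continuous_on_const])
  have cl: "closed (unitary_set :: (complex^'n^'n) set)" unfolding eq by (rule closed_Int[OF c1 c2])
  have bd: "bounded (unitary_set :: (complex^'n^'n) set)"
    unfolding bounded_iff using unitary_norm_le by blast
  show ?thesis using cl bd compact_eq_bounded_closed by blast
qed

lemma cont_lin:
  fixes f :: "'a::topological_space \<Rightarrow> real"
  assumes "continuous_on S f" "continuous_on S g"
  shows "continuous_on S (\<lambda>x. lin (f x) (g x) (K::complex^'n^'n))"
  unfolding lin_def
  by (rule continuous_on_add[OF cont_scal[OF continuous_on_const continuous_on_of_real[OF assms(1)]]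
                                 cont_scal[OF continuous_on_const continuous_on_of_real[OF assms(2)]]])

lemma Xp_cont:
  fixes K :: "complex^'n^'n"
  assumes K: "K \<in> unitary_set" and nm: "\<forall>x. K *v x = - x \<longrightarrow> x = 0"
  shows "continuous_on {0..1} (Xp K)"
proof (rule continuous_from_closed_graph[OF unitary_compact])
  show "Xp K \<in> {0..1} \<rightarrow> unitary_set" using Xp_basic[OF K nm] by auto
  have eq: "(\<lambda>x. (x, Xp K x)) ` {0..1}
      = ({0..1} \<times> UNIV) \<inter> {p. snd p ** lin (1 + fst p) (1 - fst p) K = lin (1 - fst p) (1 + fst p) K}"
  proof (rule Set.set_eqI)
    fix p :: "real \<times> (complex^'n^'n)"
    show "p \<in> (\<lambda>x. (x, Xp K x)) ` {0..1} \<longleftrightarrow>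
        p \<in> ({0..1} \<times> UNIV) \<inter> {p. snd p ** lin (1 + fst p) (1 - fst p) K = lin (1 - fst p) (1 + fst p) K}"
    proof (cases p)
      case (Pair t Y)
      show ?thesis
      proof (cases "t \<in> {0..1}")
        case True
        then have "Y ** lin (1 + t) (1 - t) K = lin (1 - t) (1 + t) K \<longleftrightarrow> Y = Xp K t"
          using Xp_basic[OF K nm, of t] by auto
        then show ?thesis using Pair True by auto
      next
        case False
        then show ?thesis using Pair by auto
      qed
    qed
  qed
  have cf: "continuous_on UNIV (\<lambda>p::real \<times> (complex^'n^'n). snd p ** lin (1 + fst p) (1 - fst p) K)"
    by (rule cont_mmult[OF continuous_on_snd[OF continuous_on_id] cont_lin])
       (intro continuous_intros)+
  have cg: "continuous_on UNIV (\<lambda>p::real \<times> (complex^'n^'n). lin (1 - fst p) (1 + fst p) K)"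
    by (rule cont_lin) (intro continuous_intros)+
  show "closed ((\<lambda>x. (x, Xp K x)) ` {0..1})"
    unfolding eq by (intro closed_Int closed_Times closed_atLeastAtMost closed_UNIV closed_Collect_eq[OF cf cg])
qed


lemma comm_lemma:
  assumes R: "R \<in> unitary_set" and c: "cmod c = 1"
    and r0: "adjoint_mat R ** U0 ** R = scal_mat c U0" and r1: "adjoint_mat R ** U1 ** R = scal_mat c U1"
  shows "(adjoint_mat U0 ** U1) ** R = R ** (adjoint_mat U0 ** U1)"
proof -
  have RR: "R ** adjoint_mat R = mat 1" "adjoint_mat R ** R = mat 1" using R by (auto simp: unitary_set_def)
  have a0: "adjoint_mat R ** adjoint_mat U0 ** R = scal_mat (cnj c) (adjoint_mat U0)"
  proof -
    have "adjoint_mat R ** adjoint_mat U0 ** R = adjoint_mat (adjoint_mat R ** U0 ** R)"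
      by (simp add: adj_mul matrix_mul_assoc)
    also have "\<dots> = scal_mat (cnj c) (adjoint_mat U0)" using r0 by (simp add: adj_scal)
    finally show ?thesis .
  qed
  have "adjoint_mat R ** (adjoint_mat U0 ** U1) ** R
      = (adjoint_mat R ** adjoint_mat U0 ** R) ** (adjoint_mat R ** U1 ** R)"
  proof -
    have "(adjoint_mat R ** adjoint_mat U0 ** R) ** (adjoint_mat R ** U1 ** R)
        = adjoint_mat R ** adjoint_mat U0 ** (R ** adjoint_mat R) ** U1 ** R"
      by (simp add: matrix_mul_assoc)
    also have "\<dots> = adjoint_mat R ** (adjoint_mat U0 ** U1) ** R" using RR by (simp add: matrix_mul_assoc)
    finally show ?thesis by simp
  qed
  also have "\<dots> = scal_mat (cnj c * c) (adjoint_mat U0 ** U1)"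
    using a0 r1 by (simp add: scal_mul_left scal_mul_right scal_scal mult.commute)
  also have "\<dots> = adjoint_mat U0 ** U1" using cnj_mult_unit[OF c] by simp
  finally have h: "adjoint_mat R ** (adjoint_mat U0 ** U1) ** R = adjoint_mat U0 ** U1" .
  have "(adjoint_mat U0 ** U1) ** R = (R ** adjoint_mat R) ** (adjoint_mat U0 ** U1) ** R" using RR by simp
  also have "\<dots> = R ** (adjoint_mat R ** (adjoint_mat U0 ** U1) ** R)" by (simp add: matrix_mul_assoc)
  also have "\<dots> = R ** (adjoint_mat U0 ** U1)" using h by simp
  finally show ?thesis .
qed

lemma chi_imp_path:
  fixes \<rho> :: "'g \<Rightarrow> complex^'n^'n"
  assumes rep: "unitary_rep G T \<rho>"
    and V: "V \<in> sym_PU G \<rho>" and W: "W \<in> sym_PU G \<rho>"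
    and eq: "\<forall>g\<in>carrier G. chiV G \<rho> V g = chiV G \<rho> W g"
  shows "path_component_of (subtopology PU_top (sym_PU G \<rho>)) V W"
proof -
  obtain U0 where U0: "U0 \<in> unitary_set" "V = pclass U0" "U0 \<in> V" using sym_PU_rep[OF V] by blast
  obtain U1 where U1: "U1 \<in> unitary_set" "W = pclass U1" "U1 \<in> W" using sym_PU_rep[OF W] by blast
  define M where "M = adjoint_mat U0 ** U1"
  have Mu: "M \<in> unitary_set" unfolding M_def by (intro unitary_mul unitary_adj U0(1) U1(1))
  have Mc: "M ** \<rho> g = \<rho> g ** M" if g: "g \<in> carrier G" for g
  proof -
    have r0: "adjoint_mat (\<rho> g) ** U0 ** \<rho> g = scal_mat (chiV G \<rho> V g) U0 \<and> cmod (chiV G \<rho> V g) = 1"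
      by (rule chi_char[OF V U0(3) g rep_unitary[OF rep g]])
    have r1: "adjoint_mat (\<rho> g) ** U1 ** \<rho> g = scal_mat (chiV G \<rho> V g) U1"
      using chi_char[OF W U1(3) g rep_unitary[OF rep g]] eq g by simp
    show ?thesis unfolding M_def
      using comm_lemma[OF rep_unitary[OF rep g] _ _ r1] r0 by blast
  qed
  obtain a where a: "cmod a = 1" "\<forall>x. M *v x = a *s x \<longrightarrow> x = 0" using exists_no_eig[OF Mu] by blast
  define \<omega> where "\<omega> = - cnj a"
  have \<omega>: "cmod \<omega> = 1" unfolding \<omega>_def using a by simp
  define K where "K = scal_mat \<omega> M"
  have Ku: "K \<in> unitary_set" unfolding K_def by (rule unitary_scal[OF Mu \<omega>])
  have nm: "\<forall>x. K *v x = - x \<longrightarrow> x = 0"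
  proof (intro allI impI)
    fix x assume h: "K *v x = - x"
    have "M *v x = (cnj \<omega> * \<omega>) *s (M *v x)" using cnj_mult_unit[OF \<omega>] by simp
    also have "\<dots> = cnj \<omega> *s (K *v x)" unfolding K_def by (simp add: mv_scal vector_smult_assoc)
    also have "\<dots> = a *s x" using h unfolding \<omega>_def by (simp add: vector_smult_rneg vector_smult_lneg)
    finally show "x = 0" using a(2) by blast
  qed
  have Kc: "K ** \<rho> g = \<rho> g ** K" if g: "g \<in> carrier G" for g
    unfolding K_def using Mc[OF g] by (simp add: scal_mul_left scal_mul_right)
  define \<Gamma> where "\<Gamma> t = U0 ** Xp K t" for t
  have Xb: "\<And>t. t \<in> {0..1} \<Longrightarrow> Xp K t \<in> unitary_set \<and> (\<forall>R. K ** R = R ** K \<longrightarrow> Xp K t ** R = R ** Xp K t)"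
    using Xp_basic[OF Ku nm] by auto
  have \<Gamma>u: "\<Gamma> t \<in> unitary_set" if t: "t \<in> {0..1}" for t
    unfolding \<Gamma>_def using U0(1) Xb[OF t] unitary_mul by blast
  have \<Gamma>sym: "pclass (\<Gamma> t) \<in> sym_PU G \<rho>" if t: "t \<in> {0..1}" for t
  proof (rule sym_PU_mem[OF \<Gamma>u[OF t] rep_unitary[OF rep]])
    fix g assume g: "g \<in> carrier G"
    have r0: "adjoint_mat (\<rho> g) ** U0 ** \<rho> g = scal_mat (chiV G \<rho> V g) U0 \<and> cmod (chiV G \<rho> V g) = 1"
      by (rule chi_char[OF V U0(3) g rep_unitary[OF rep g]])
    have XR: "Xp K t ** \<rho> g = \<rho> g ** Xp K t" using Xb[OF t] Kc[OF g] by blast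
    have "adjoint_mat (\<rho> g) ** \<Gamma> t ** \<rho> g = adjoint_mat (\<rho> g) ** U0 ** (Xp K t ** \<rho> g)"
      unfolding \<Gamma>_def by (simp add: matrix_mul_assoc)
    also have "\<dots> = (adjoint_mat (\<rho> g) ** U0 ** \<rho> g) ** Xp K t" unfolding XR by (simp add: matrix_mul_assoc)
    also have "\<dots> = scal_mat (chiV G \<rho> V g) (\<Gamma> t)" using r0 unfolding \<Gamma>_def by (simp add: scal_mul_left)
    finally show "\<exists>c. cmod c = 1 \<and> adjoint_mat (\<rho> g) ** \<Gamma> t ** \<rho> g = scal_mat c (\<Gamma> t)" using r0 by blast
  qed
  have c\<Gamma>: "continuous_on {0..1} \<Gamma>"
    unfolding \<Gamma>_def by (rule cont_mmult[OF continuous_on_const Xp_cont[OF Ku nm]])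
  have cU: "continuous_map (top_of_set {0..1}) U_top \<Gamma>"
    unfolding U_top_def continuous_map_in_subtopology using c\<Gamma> \<Gamma>u by auto
  have cP: "continuous_map (top_of_set {0..1}) PU_top (pclass \<circ> \<Gamma>)"
    by (rule continuous_map_compose[OF cU pclass_cont])
  have path: "pathin (subtopology PU_top (sym_PU G \<rho>)) (pclass \<circ> \<Gamma>)"
    unfolding pathin_def continuous_map_in_subtopology using cP \<Gamma>sym by auto
  have e0: "(pclass \<circ> \<Gamma>) 0 = V" unfolding \<Gamma>_def using Xp_0[OF Ku nm] U0(2) by simp
  have e1: "(pclass \<circ> \<Gamma>) 1 = W"
  proof -
    have "U0 ** K = scal_mat \<omega> ((U0 ** adjoint_mat U0) ** U1)"
      unfolding K_def M_def by (simp add: scal_mul_right matrix_mul_assoc)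
    also have "\<dots> = scal_mat \<omega> U1" using U0(1) by (simp add: unitary_set_def)
    finally have "pclass (U0 ** K) = pclass U1" using pclass_scal[OF \<omega>] by simp
    then show ?thesis unfolding \<Gamma>_def using Xp_1[OF Ku nm] U1(2) by simp
  qed
  show ?thesis unfolding path_component_of_def using path e0 e1 by blast
qed


theorem mainTheorem8:
  fixes G :: "('g, 'x) monoid_scheme" and T :: "'g topology"
    and \<rho> :: "'g \<Rightarrow> complex^'n^'n"
  assumes "topological_group G T"
    and "unitary_rep G T \<rho>"
  shows
    \<comment> \<open>well-definedness: chi[V] is a character and satisfies the defining relation for every lift\<close>
    "(\<forall>V\<in>sym_PU G \<rho>. character G T (chiV G \<rho> V) \<and>
        (\<forall>U\<in>V. \<forall>g\<in>carrier G.
           adjoint_mat (\<rho> g) ** U ** \<rho> g = scal_mat (chiV G \<rho> V g) U))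
   \<and> \<comment> \<open>path components of the symmetric space correspond to attained values of chi[V]\<close>
     (\<forall>V\<in>sym_PU G \<rho>. \<forall>W\<in>sym_PU G \<rho>.
        path_component_of (subtopology PU_top (sym_PU G \<rho>)) V W
          \<longleftrightarrow> (\<forall>g\<in>carrier G. chiV G \<rho> V g = chiV G \<rho> W g))
   \<and> \<comment> \<open>attained values have finite order\<close>
     (\<forall>V\<in>sym_PU G \<rho>. finite_order_char G (chiV G \<rho> V))
   \<and> \<comment> \<open>every torsion character is attained for \<rho> = \<oplus>_{p<n} \<psi>^p, n the order of \<psi>\<close>
     (\<forall>(\<psi>::'g \<Rightarrow> complex) (e::'k::finite \<Rightarrow> nat).
        character G T \<psi> \<and> finite_order_char G \<psi> \<and> char_order G \<psi> = CARD('k) \<and>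
        bij_betw e UNIV {..<CARD('k)} \<longrightarrow>
        (\<exists>V\<in>sym_PU G (diag_powers_rep e \<psi>).
           \<forall>g\<in>carrier G. chiV G (diag_powers_rep e \<psi>) V g = \<psi> g))
   \<and> \<comment> \<open>multiplicativity under tensor products, and stability under V \<mapsto> V \<otimes> 1\<close>
     (\<forall>(\<sigma>::'g \<Rightarrow> complex^'m::finite^'m). unitary_rep G T \<sigma> \<longrightarrow>
        (\<forall>V\<in>sym_PU G \<rho>. \<forall>Q\<in>sym_PU G \<sigma>.
           ptensor V Q \<in> sym_PU G (tensor_rep \<rho> \<sigma>) \<and>
           (\<forall>g\<in>carrier G. chiV G (tensor_rep \<rho> \<sigma>) (ptensor V Q) g
                           = chiV G \<rho> V g * chiV G \<sigma> Q g)) \<and>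
        (\<forall>V\<in>sym_PU G \<rho>.
           ptensor V (pclass (mat 1)) \<in> sym_PU G (tensor_rep \<rho> \<sigma>) \<and>
           (\<forall>g\<in>carrier G. chiV G (tensor_rep \<rho> \<sigma>) (ptensor V (pclass (mat 1))) g
                           = chiV G \<rho> V g)))"
proof -
  note rep = assms(2) and tg = assms(1)
  have P1: "\<forall>V\<in>sym_PU G \<rho>. character G T (chiV G \<rho> V) \<and>
        (\<forall>U\<in>V. \<forall>g\<in>carrier G.
           adjoint_mat (\<rho> g) ** U ** \<rho> g = scal_mat (chiV G \<rho> V g) U)"
  proof
    fix V assume V: "V \<in> sym_PU G \<rho>"
    show "character G T (chiV G \<rho> V) \<and>
        (\<forall>U\<in>V. \<forall>g\<in>carrier G.
           adjoint_mat (\<rho> g) ** U ** \<rho> g = scal_mat (chiV G \<rho> V g) U)"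
      using chi_character[OF rep tg V] chi_char[OF V _ _ rep_unitary[OF rep]] by blast
  qed
  have P2: "\<forall>V\<in>sym_PU G \<rho>. \<forall>W\<in>sym_PU G \<rho>.
        path_component_of (subtopology PU_top (sym_PU G \<rho>)) V W
          \<longleftrightarrow> (\<forall>g\<in>carrier G. chiV G \<rho> V g = chiV G \<rho> W g)"
  proof (intro ballI, rule iffI)
    fix V W assume V: "V \<in> sym_PU G \<rho>" and W: "W \<in> sym_PU G \<rho>"
    {
      assume "path_component_of (subtopology PU_top (sym_PU G \<rho>)) V W"
      then show "\<forall>g\<in>carrier G. chiV G \<rho> V g = chiV G \<rho> W g"
        using path_imp_chi[OF rep V W] by blast
    }
    {
      assume "\<forall>g\<in>carrier G. chiV G \<rho> V g = chiV G \<rho> W g"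
      then show "path_component_of (subtopology PU_top (sym_PU G \<rho>)) V W"
        by (rule chi_imp_path[OF rep V W])
    }
  qed
  have P3: "\<forall>V\<in>sym_PU G \<rho>. finite_order_char G (chiV G \<rho> V)"
  proof
    fix V assume V: "V \<in> sym_PU G \<rho>"
    have "CARD('n) > 0" by simp
    then show "finite_order_char G (chiV G \<rho> V)"
      unfolding finite_order_char_def using chi_finite_order[OF rep V] by blast
  qed
  have P4: "\<forall>(\<psi>::'g \<Rightarrow> complex) (e::'k::finite \<Rightarrow> nat).
        character G T \<psi> \<and> finite_order_char G \<psi> \<and> char_order G \<psi> = CARD('k) \<and>
        bij_betw e UNIV {..<CARD('k)} \<longrightarrow>
        (\<exists>V\<in>sym_PU G (diag_powers_rep e \<psi>).
           \<forall>g\<in>carrier G. chiV G (diag_powers_rep e \<psi>) V g = \<psi> g)"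
    using torsion_part by blast
  have P5: "\<forall>(\<sigma>::'g \<Rightarrow> complex^'m::finite^'m). unitary_rep G T \<sigma> \<longrightarrow>
        (\<forall>V\<in>sym_PU G \<rho>. \<forall>Q\<in>sym_PU G \<sigma>.
           ptensor V Q \<in> sym_PU G (tensor_rep \<rho> \<sigma>) \<and>
           (\<forall>g\<in>carrier G. chiV G (tensor_rep \<rho> \<sigma>) (ptensor V Q) g
                           = chiV G \<rho> V g * chiV G \<sigma> Q g)) \<and>
        (\<forall>V\<in>sym_PU G \<rho>.
           ptensor V (pclass (mat 1)) \<in> sym_PU G (tensor_rep \<rho> \<sigma>) \<and>
           (\<forall>g\<in>carrier G. chiV G (tensor_rep \<rho> \<sigma>) (ptensor V (pclass (mat 1))) g
                           = chiV G \<rho> V g))"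
  proof (intro allI impI conjI ballI)
    fix \<sigma> :: "'g \<Rightarrow> complex^'m::finite^'m"
    assume rs: "unitary_rep G T \<sigma>"
    {
      fix V Q assume V: "V \<in> sym_PU G \<rho>" and Q: "Q \<in> sym_PU G \<sigma>"
      show "ptensor V Q \<in> sym_PU G (tensor_rep \<rho> \<sigma>)"
        using tensor_part[OF rep rs V Q] by blast
    }
    {
      fix V Q g assume V: "V \<in> sym_PU G \<rho>" and Q: "Q \<in> sym_PU G \<sigma>" and g: "g \<in> carrier G"
      show "chiV G (tensor_rep \<rho> \<sigma>) (ptensor V Q) g = chiV G \<rho> V g * chiV G \<sigma> Q g"
        using tensor_part[OF rep rs V Q] g by blast
    }
    have one: "pclass (mat 1) \<in> sym_PU G \<sigma> \<and> (\<forall>g\<in>carrier G. chiV G \<sigma> (pclass (mat 1)) g = 1)"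
      by (rule one_sym[OF rs])
    {
      fix V assume V: "V \<in> sym_PU G \<rho>"
      show "ptensor V (pclass (mat 1)) \<in> sym_PU G (tensor_rep \<rho> \<sigma>)"
        using tensor_part[OF rep rs V conjunct1[OF one]] by blast
    }
    {
      fix V g assume V: "V \<in> sym_PU G \<rho>" and g: "g \<in> carrier G"
      have "chiV G (tensor_rep \<rho> \<sigma>) (ptensor V (pclass (mat 1))) g
          = chiV G \<rho> V g * chiV G \<sigma> (pclass (mat 1)) g"
        using tensor_part[OF rep rs V conjunct1[OF one]] g by blast
      then show "chiV G (tensor_rep \<rho> \<sigma>) (ptensor V (pclass (mat 1))) g = chiV G \<rho> V g"
        using one g by simp
    }
  qed
  show ?thesis using P1 P2 P3 P4 P5 by blast
qed

end
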